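(* Fix a total order on $I$ and index by pairs $(m,n)$ with $m<n$ (i.e. by the off-diagonal fields $\langle m,n\rangle$). Define the matrix $S^{J}_{\langle m,n\rangle\langle p,q\rangle}=S_{mp}S_{nq}-S_{mq}S_{np}$ and the diagonal matrix $T^{J}_{\langle m,n\rangle}=T_mT_n$. Then $S^J$ is unitary, and if $S$ and $T$ satisfy $(ST)^3=S^2$ then $(S^JT^J)^3=(S^J)^2$.
   Context: Let $\mathcal{A}$ be a rational conformal field theory with finite set of primary fields $I$, unitary symmetric modular matrix $S$ and diagonal modular matrix $T=\mathrm{diag}(T_i)$, $T_i=e^{2\pi i(h_i-c/24)}$. The matrix $S^J$ above is the fixed point resolution matrix proposed for the anti-symmetric identity current $J=(0,1)$ of the $\mathbb{Z}_2$ permutation orbifold of $\mathcal{A}$, whose fixed points are exactly the off-diagonal fields $\langle m,n\rangle$, $m\neq n$. *)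

theory Defs
  imports Complex_Main
begin

definition mat_mult :: "'a set \<Rightarrow> ('a \<Rightarrow> 'a \<Rightarrow> complex) \<Rightarrow> ('a \<Rightarrow> 'a \<Rightarrow> complex) \<Rightarrow> ('a \<Rightarrow> 'a \<Rightarrow> complex)" where
  "mat_mult A X Y = (\<lambda>i j. \<Sum>k\<in>A. X i k * Y k j)"

definition mat_adj :: "('a \<Rightarrow> 'a \<Rightarrow> complex) \<Rightarrow> ('a \<Rightarrow> 'a \<Rightarrow> complex)" where
  "mat_adj X = (\<lambda>i j. cnj (X j i))"

definition id_mat :: "'a \<Rightarrow> 'a \<Rightarrow> complex" where
  "id_mat = (\<lambda>i j. if i = j then 1 else 0)"

definition diag_mat :: "('a \<Rightarrow> complex) \<Rightarrow> 'a \<Rightarrow> 'a \<Rightarrow> complex" where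
  "diag_mat d = (\<lambda>i j. if i = j then d i else 0)"

definition mat_eq_on :: "'a set \<Rightarrow> ('a \<Rightarrow> 'a \<Rightarrow> complex) \<Rightarrow> ('a \<Rightarrow> 'a \<Rightarrow> complex) \<Rightarrow> bool" where
  "mat_eq_on A X Y \<longleftrightarrow> (\<forall>i\<in>A. \<forall>j\<in>A. X i j = Y i j)"

definition unitary_on :: "'a set \<Rightarrow> ('a \<Rightarrow> 'a \<Rightarrow> complex) \<Rightarrow> bool" where
  "unitary_on A X \<longleftrightarrow> mat_eq_on A (mat_mult A (mat_adj X) X) id_mat
                      \<and> mat_eq_on A (mat_mult A X (mat_adj X)) id_mat"

definition offdiag :: "('i::linorder \<times> 'i) set" where
  "offdiag = {(m, n). m < n}"

definition SJ :: "('i \<Rightarrow> 'i \<Rightarrow> complex) \<Rightarrow> ('i \<times> 'i) \<Rightarrow> ('i \<times> 'i) \<Rightarrow> complex" where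
  "SJ S = (\<lambda>(m, n) (p, q). S m p * S n q - S m q * S n p)"

definition TJ :: "('i \<Rightarrow> complex) \<Rightarrow> ('i \<times> 'i) \<Rightarrow> ('i \<times> 'i) \<Rightarrow> complex" where
  "TJ T = diag_mat (\<lambda>(m, n). T m * T n)"

end

theory Submission imports Defs begin

lemma cb_full:
  fixes A B :: "'i::finite \<Rightarrow> 'i \<Rightarrow> complex"
  shows "(\<Sum>k\<in>UNIV. \<Sum>l\<in>UNIV. (A m k * A n l - A m l * A n k) * (B k p * B l q - B k q * B l p))
     = 2 * SJ (mat_mult UNIV A B) (m,n) (p,q)"
proof -
  have e1: "(\<Sum>k\<in>UNIV. \<Sum>l\<in>UNIV. A m k * A n l * (B k p * B l q))
      = mat_mult UNIV A B m p * mat_mult UNIV A B n q"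
    by (simp add: mat_mult_def sum_product mult_ac)
  have e2: "(\<Sum>k\<in>UNIV. \<Sum>l\<in>UNIV. A m k * A n l * (B k q * B l p))
      = mat_mult UNIV A B m q * mat_mult UNIV A B n p"
    by (simp add: mat_mult_def sum_product mult_ac)
  have e3: "(\<Sum>k\<in>UNIV. \<Sum>l\<in>UNIV. A m l * A n k * (B k p * B l q))
      = mat_mult UNIV A B m q * mat_mult UNIV A B n p"
    apply (subst sum.swap)
    by (simp add: mat_mult_def sum_product mult_ac)
  have e4: "(\<Sum>k\<in>UNIV. \<Sum>l\<in>UNIV. A m l * A n k * (B k q * B l p))
      = mat_mult UNIV A B m p * mat_mult UNIV A B n q"
    apply (subst sum.swap)
    by (simp add: mat_mult_def sum_product mult_ac)
  have "(\<Sum>k\<in>UNIV. \<Sum>l\<in>UNIV. (A m k * A n l - A m l * A n k) * (B k p * B l q - B k q * B l p))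
    = (\<Sum>k\<in>UNIV. \<Sum>l\<in>UNIV. A m k * A n l * (B k p * B l q)) - (\<Sum>k\<in>UNIV. \<Sum>l\<in>UNIV. A m k * A n l * (B k q * B l p))
     - (\<Sum>k\<in>UNIV. \<Sum>l\<in>UNIV. A m l * A n k * (B k p * B l q)) + (\<Sum>k\<in>UNIV. \<Sum>l\<in>UNIV. A m l * A n k * (B k q * B l p))"
    by (simp add: algebra_simps sum.distrib sum_subtractf)
  then show ?thesis using e1 e2 e3 e4 by (simp add: SJ_def algebra_simps)
qed

lemma swap_sum_lt:
  fixes g :: "'i::linorder \<times> 'i \<Rightarrow> complex"
  shows "sum g {(k,l). l < k} = sum (\<lambda>(k,l). g (l,k)) {(k,l). k < l}"
proof -
  have "{(k,l). l < k} = prod.swap ` {(k::'i,l). k < l}" by auto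
  then show ?thesis by (simp add: sum.reindex case_prod_beta) (rule sum.cong, auto)
qed

lemma cb:
  fixes A B :: "'i::{finite,linorder} \<Rightarrow> 'i \<Rightarrow> complex"
  shows "mat_mult offdiag (SJ A) (SJ B) x y = SJ (mat_mult UNIV A B) x y"
proof -
  obtain m n p q where xy: "x = (m,n)" "y = (p,q)" by (cases x, cases y) auto
  define f where "f k l = (A m k * A n l - A m l * A n k) * (B k p * B l q - B k q * B l p)" for k l
  have fsym: "f k l = f l k" for k l unfolding f_def by (simp add: algebra_simps)
  have fdiag: "f k k = 0" for k unfolding f_def by simp
  have U: "(UNIV :: ('i\<times>'i) set) = ({(k,l). k < l} \<union> {(k,l). l < k}) \<union> {(k,l). k = l}"
    by (auto simp: not_less_iff_gr_or_eq)
  have "(\<Sum>k\<in>UNIV. \<Sum>l\<in>UNIV. f k l) = (\<Sum>(k,l)\<in>UNIV. f k l)"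
    by (simp add: sum.cartesian_product)
  also have "\<dots> = (\<Sum>(k,l)\<in>{(k,l). k < l}. f k l) + (\<Sum>(k,l)\<in>{(k,l). l < k}. f k l)
       + (\<Sum>(k,l)\<in>{(k,l). k = l}. f k l)"
    apply (subst U)
    apply (subst sum.union_disjoint, simp, simp, fastforce)
    apply (subst sum.union_disjoint, simp, simp, fastforce)
    by simp
  also have "(\<Sum>(k,l)\<in>{(k,l). k = l}. f k l) = 0"
    by (rule sum.neutral) (auto simp: fdiag)
  also have "(\<Sum>(k,l)\<in>{(k,l). l < k}. f k l) = (\<Sum>(k,l)\<in>{(k,l). k < l}. f k l)"
    by (subst swap_sum_lt) (simp add: fsym)
  finally have "(\<Sum>k\<in>UNIV. \<Sum>l\<in>UNIV. f k l) = 2 * (\<Sum>(k,l)\<in>offdiag. f k l)"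
    by (simp add: offdiag_def)
  moreover have "mat_mult offdiag (SJ A) (SJ B) x y = (\<Sum>(k,l)\<in>offdiag. f k l)"
    by (simp add: xy mat_mult_def SJ_def f_def case_prod_beta)
  ultimately show ?thesis using cb_full[of A m n B p q] unfolding f_def[abs_def] xy
    by simp
qed

lemma mult_cong_off:
  assumes "mat_eq_on A X X'" "mat_eq_on A Y Y'"
  shows "mat_eq_on A (mat_mult A X Y) (mat_mult A X' Y')"
  using assms unfolding mat_eq_on_def mat_mult_def by (auto intro!: sum.cong)

lemma eq_refl: "mat_eq_on A X X" by (simp add: mat_eq_on_def)
lemma eq_sym: "mat_eq_on A X Y \<Longrightarrow> mat_eq_on A Y X" by (simp add: mat_eq_on_def)
lemma eq_trans: "mat_eq_on A X Y \<Longrightarrow> mat_eq_on A Y Z \<Longrightarrow> mat_eq_on A X Z" by (simp add: mat_eq_on_def)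

lemma cb_eq:
  fixes A B :: "'i::{finite,linorder} \<Rightarrow> 'i \<Rightarrow> complex"
  shows "mat_eq_on offdiag (mat_mult offdiag (SJ A) (SJ B)) (SJ (mat_mult UNIV A B))"
  by (simp add: mat_eq_on_def cb)

lemma TJ_eq: "mat_eq_on offdiag (SJ (diag_mat T)) (TJ T)"
  unfolding mat_eq_on_def offdiag_def SJ_def TJ_def diag_mat_def by auto

lemma id_eq: "mat_eq_on offdiag (SJ id_mat) id_mat"
  unfolding mat_eq_on_def offdiag_def SJ_def id_mat_def by auto

lemma adj_SJ: "mat_adj (SJ S) = SJ (mat_adj S)"
  by (auto simp: fun_eq_iff mat_adj_def SJ_def)

lemma eqUNIV: "mat_eq_on UNIV X Y \<Longrightarrow> X = Y"
  by (auto simp: mat_eq_on_def fun_eq_iff)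

theorem mainTheorem7:
  fixes S :: "'i::{finite,linorder} \<Rightarrow> 'i \<Rightarrow> complex"
    and T :: "'i \<Rightarrow> complex"
    and h :: "'i \<Rightarrow> real" and c :: real
  assumes S_sym: "\<And>i j. S i j = S j i"
    and S_unitary: "unitary_on UNIV S"
    and T_def: "\<And>i. T i = exp (2 * pi * \<i> * complex_of_real (h i - c / 24))"
  shows "unitary_on offdiag (SJ S)
    \<and> (mat_eq_on UNIV
           (mat_mult UNIV (mat_mult UNIV S (diag_mat T))
              (mat_mult UNIV (mat_mult UNIV S (diag_mat T)) (mat_mult UNIV S (diag_mat T))))
           (mat_mult UNIV S S)
       \<longrightarrow> mat_eq_on offdiag
           (mat_mult offdiag (mat_mult offdiag (SJ S) (TJ T))
              (mat_mult offdiag (mat_mult offdiag (SJ S) (TJ T)) (mat_mult offdiag (SJ S) (TJ T))))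
           (mat_mult offdiag (SJ S) (SJ S)))"
proof (intro conjI impI)
  have u1: "mat_mult UNIV (mat_adj S) S = id_mat" and u2: "mat_mult UNIV S (mat_adj S) = id_mat"
    using S_unitary unfolding unitary_on_def by (auto intro: eqUNIV)
  show "unitary_on offdiag (SJ S)"
    unfolding unitary_on_def adj_SJ
  proof
    show "mat_eq_on offdiag (mat_mult offdiag (SJ (mat_adj S)) (SJ S)) id_mat"
      using eq_trans[OF cb_eq[of "mat_adj S" S]] id_eq u1 by simp
    show "mat_eq_on offdiag (mat_mult offdiag (SJ S) (SJ (mat_adj S))) id_mat"
      using eq_trans[OF cb_eq[of S "mat_adj S"]] id_eq u2 by simp
  qed
next
  define M where "M = mat_mult UNIV S (diag_mat T)"
  assume "mat_eq_on UNIV (mat_mult UNIV M (mat_mult UNIV M M)) (mat_mult UNIV S S)"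
  then have H: "mat_mult UNIV M (mat_mult UNIV M M) = mat_mult UNIV S S"
    unfolding M_def by (rule eqUNIV)
  have m1: "mat_eq_on offdiag (mat_mult offdiag (SJ S) (TJ T)) (SJ M)"
    unfolding M_def
    by (rule eq_trans[OF mult_cong_off[OF eq_refl eq_sym[OF TJ_eq]] cb_eq])
  have m2: "mat_eq_on offdiag (mat_mult offdiag (mat_mult offdiag (SJ S) (TJ T)) (mat_mult offdiag (SJ S) (TJ T)))
      (SJ (mat_mult UNIV M M))"
    by (rule eq_trans[OF mult_cong_off[OF m1 m1] cb_eq])
  have m3: "mat_eq_on offdiag (mat_mult offdiag (mat_mult offdiag (SJ S) (TJ T))
              (mat_mult offdiag (mat_mult offdiag (SJ S) (TJ T)) (mat_mult offdiag (SJ S) (TJ T))))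
      (SJ (mat_mult UNIV M (mat_mult UNIV M M)))"
    by (rule eq_trans[OF mult_cong_off[OF m1 m2] cb_eq])
  show "mat_eq_on offdiag
           (mat_mult offdiag (mat_mult offdiag (SJ S) (TJ T))
              (mat_mult offdiag (mat_mult offdiag (SJ S) (TJ T)) (mat_mult offdiag (SJ S) (TJ T))))
           (mat_mult offdiag (SJ S) (SJ S))"
    using eq_trans[OF m3[unfolded H] eq_sym[OF cb_eq[of S S]]] .
qed

end
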